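(* Let $q>1$ and let $k$ be a positive integer. For $z,s\in\mathbb{C}$ with $|z|<1$ and $\Re(s)<1$ (the variable of integration $a$ ranging over $a\in\mathbb C\setminus\mathbb Z_0^-$), $$\int_0^1 \Phi_k(z,s,a)\,d_qa=\frac{1}{[1-s]_q}+\sum_{r=0}^{k-1}\binom kr \sum_{l=0}^\infty\binom{-s}{l}\frac{\mathrm{Li}_{k-r}(z,s+l)}{[l+1]_q}.$$ Moreover, for $a\in\mathbb C\setminus\mathbb Z_0^-$ and with $s\in\mathbb C$ arbitrary when $|z|<1$, or $\Re(s)>k$ when $|z|=1$, $$\int_0^1 \Phi_k(z,s,k-a)\,d_qa= z^{-k}\sum_{l=0}^\infty(-1)^l\binom{-s}{l}\frac{\mathrm{Li}_{k}(z,s+l)}{[l+1]_q},$$ $$\int_0^1 \Phi_k(z,s,k+a)\,d_qa= z^{-k}\sum_{l=0}^\infty\binom{-s}{l}\frac{\mathrm{Li}_{k}(z,s+l)}{[l+1]_q}.$$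
   Context: $\mathbb Z_0^-=\{0,-1,-2,\ldots\}$. For $q>1$, the Jackson integral is $\int_0^1 f(a)\,d_qa=(q-1)\sum_{n=1}^\infty f(q^{-n})q^{-n}$, and $[x]_q=\frac{q^{x}-1}{q-1}$. The multiple Hurwitz-Lerch zeta function is $\Phi_k(z,s,a)=\sum_{m_1,\ldots,m_k=0}^\infty\frac{z^{m_1+\dots+m_k}}{(m_1+\dots+m_k+a)^{s}}$ for $a\in\mathbb C\setminus\mathbb Z_0^-$, with $s\in\mathbb C$ when $|z|<1$ and $\Re(s)>k$ when $|z|=1$. The multiple Lipschitz-Lerch zeta function is $\mathrm{Li}_k(z,s)=\sum_{m_1,\ldots,m_k=1}^\infty\frac{z^{m_1+\dots+m_k}}{(m_1+\dots+m_k)^{s}}$, with $s\in\mathbb C$ when $|z|<1$ and $\Re(s)>k$ when $|z|=1$. $\binom{-s}{l}=\frac{(-s)(-s-1)\cdots(-s-l+1)}{l!}$. *)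

theory Defs
  imports "HOL-Analysis.Analysis"
begin

text \<open>Jackson integral over [0,1] for q > 1:
  (q-1) * sum_{n>=1} f(q^{-n}) q^{-n}.  The summand for index n (starting at 0) uses q^{-(n+1)}.\<close>
definition jackson_term :: "real \<Rightarrow> (real \<Rightarrow> complex) \<Rightarrow> nat \<Rightarrow> complex" where
  "jackson_term q f n = of_real (q - 1) * f (q powr (- real (Suc n))) * of_real (q powr (- real (Suc n)))"

definition jackson_integrable :: "real \<Rightarrow> (real \<Rightarrow> complex) \<Rightarrow> bool" where
  "jackson_integrable q f \<longleftrightarrow> summable (jackson_term q f)"

definition jackson_integral :: "real \<Rightarrow> (real \<Rightarrow> complex) \<Rightarrow> complex" where
  "jackson_integral q f = (\<Sum>n. jackson_term q f n)"

definition qnum :: "real \<Rightarrow> complex \<Rightarrow> complex" where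
  "qnum q x = (of_real q powr x - 1) / (of_real q - 1)"

definition multi_HL_zeta :: "nat \<Rightarrow> complex \<Rightarrow> complex \<Rightarrow> complex \<Rightarrow> complex" where
  "multi_HL_zeta k z s a =
     (\<Sum>\<^sub>\<infinity>m\<in>{m::nat list. length m = k}. z ^ sum_list m / (of_nat (sum_list m) + a) powr s)"

definition multi_LL_zeta :: "nat \<Rightarrow> complex \<Rightarrow> complex \<Rightarrow> complex" where
  "multi_LL_zeta k z s =
     (\<Sum>\<^sub>\<infinity>m\<in>{m::nat list. length m = k \<and> (\<forall>i\<in>set m. 1 \<le> i)}.
        z ^ sum_list m / (of_nat (sum_list m)) powr s)"

end

theory Submission
  imports Defs "HOL-Real_Asymp.Real_Asymp"
begin


lemma suminf_infsum_nat:
  fixes f :: "nat \<Rightarrow> 'a::{topological_comm_monoid_add,t2_space}"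
  assumes "f summable_on UNIV"
  shows "summable f \<and> suminf f = infsum f UNIV"
  using assms has_sum_imp_sums[OF has_sum_infsum[OF assms]] sums_unique summable_on_imp_summable
  by (metis sums_summable)

lemma prod_summable_nonneg:
  fixes f :: "'a \<Rightarrow> real" and g :: "'b \<Rightarrow> real"
  assumes "f summable_on A" "g summable_on B" "\<And>x. x \<in> A \<Longrightarrow> f x \<ge> 0" "\<And>y. y \<in> B \<Longrightarrow> g y \<ge> 0"
  shows "(\<lambda>(x,y). f x * g y) summable_on A \<times> B"
proof -
  have "(\<lambda>p. f (fst p) * g (snd p)) summable_on Sigma A (\<lambda>_. B)"
  proof (rule summable_on_SigmaI[where g = "\<lambda>x. f x * infsum g B"])
    fix x assume "x \<in> A"
    show "((\<lambda>y. f (fst (x, y)) * g (snd (x, y))) has_sum f x * infsum g B) B"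
      using has_sum_cmult_right[OF has_sum_infsum[OF assms(2)]] by simp
  next
    show "(\<lambda>x. f x * infsum g B) summable_on A"
      using summable_on_cmult_left[OF assms(1)] .
  next
    fix x y assume "x \<in> A" "y \<in> B" then show "0 \<le> f (fst (x, y)) * g (snd (x, y))"
      using assms by simp
  qed
  then show ?thesis by (simp add: case_prod_unfold)
qed

lemma binom_norm_summable:
  fixes a :: complex and r :: real
  assumes "0 \<le> r" "r < 1"
  shows "summable (\<lambda>n. norm (a gchoose n) * r ^ n)"
proof -
  define x :: complex where "x = of_real ((1 + r) / 2)"
  have "norm x = (1 + r) / 2" unfolding x_def norm_of_real using assms by auto
  then have nx: "norm x < 1" "r < norm x" using assms by auto
  have "summable (\<lambda>n. (a gchoose n) * x ^ n)"
    using gen_binomial_complex[OF nx(1)] sums_summable by blast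
  from powser_insidea[OF this, of "of_real r"] nx assms
  show ?thesis by (simp add: norm_mult norm_power)
qed

lemma alpha_eq: assumes "q > 0" shows "q powr (- real (Suc n)) = (1/q) ^ Suc n"
proof -
  have "q powr (- real (Suc n)) = inverse (q powr real (Suc n))" by (rule powr_minus)
  also have "\<dots> = inverse (q ^ Suc n)" using powr_realpow[OF assms] by metis
  also have "\<dots> = (1/q)^Suc n" by (simp add: power_one_over inverse_eq_divide)
  finally show ?thesis .
qed

lemma qnum_nat:
  fixes q :: real
  assumes "q > 1"
  shows "qnum q (of_nat n) = of_real ((q ^ n - 1) / (q - 1))"
proof -
  have "(of_real q :: complex) powr of_nat n = of_real q ^ n"
    using assms by (intro powr_nat') auto
  then show ?thesis unfolding qnum_def by simp
qed

lemma jackson_geom: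
  fixes q :: real
  assumes "q > 1"
  shows "((\<lambda>n. (q - 1) * ((1/q) ^ Suc n) ^ Suc l) has_sum (1 / ((q ^ Suc l - 1) / (q - 1)))) UNIV"
proof -
  define \<rho> where "\<rho> = (1/q) ^ Suc l"
  have q1: "0 < 1/q" "1/q < 1" using assms by (simp_all add: field_simps)
  have r0: "0 < \<rho>" "\<rho> < 1" unfolding \<rho>_def
    by (rule zero_less_power[OF q1(1)], rule power_Suc_less_one[OF q1])
  have e: "((1/q) ^ Suc n) ^ Suc l = \<rho> * \<rho> ^ n" for n
  proof -
    have "((1/q) ^ Suc n) ^ Suc l = ((1/q) ^ Suc l) ^ Suc n"
      by (simp only: power_mult[symmetric] mult.commute)
    then show ?thesis by (simp add: \<rho>_def)
  qed
  have "(\<lambda>n. (q - 1) * \<rho> * \<rho> ^ n) sums ((q - 1) * \<rho> * (1 / (1 - \<rho>)))"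
    by (intro sums_mult geometric_sums) (use r0 in auto)
  moreover have "(q - 1) * \<rho> * (1 / (1 - \<rho>)) = 1 / ((q ^ Suc l - 1) / (q - 1))"
  proof -
    define Q where "Q = q ^ Suc l"
    have Q1: "Q > 1" unfolding Q_def using assms by (rule one_less_power) simp
    have rq: "\<rho> = 1 / Q" by (simp add: \<rho>_def Q_def power_one_over)
    show ?thesis unfolding rq Q_def[symmetric] using Q1 assms by (simp add: field_simps)
  qed
  ultimately have "(\<lambda>n. (q - 1) * \<rho> * \<rho> ^ n) sums (1 / ((q ^ Suc l - 1) / (q - 1)))" by simp
  then have "((\<lambda>n. (q - 1) * \<rho> * \<rho> ^ n) has_sum (1 / ((q ^ Suc l - 1) / (q - 1)))) UNIV"
    by (rule sums_nonneg_imp_has_sum) (use r0 assms in auto)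
  then show ?thesis by (simp only: e mult.assoc)
qed



lemma core:
  fixes q e :: real and s :: complex and I :: "'i set" and w :: "'i \<Rightarrow> complex" and B :: "'i \<Rightarrow> real"
  assumes q: "q > 1" and e: "\<bar>e\<bar> \<le> 1"
    and B: "\<And>i. i \<in> I \<Longrightarrow> B i \<ge> 1"
    and S: "(\<lambda>i. norm (w i) * B i powr (- Re s)) summable_on I"
  defines "G \<equiv> \<lambda>a. infsum (\<lambda>i. w i / of_real (B i + e * a) powr s) I"
    and "L \<equiv> \<lambda>l. infsum (\<lambda>i. w i / of_real (B i) powr (s + of_nat l)) I"
  shows "jackson_integrable q G \<and>
         summable (\<lambda>l. of_real e ^ l * ((-s) gchoose l) * L l / qnum q (of_nat (l+1))) \<and>
         jackson_integral q G = (\<Sum>l. of_real e ^ l * ((-s) gchoose l) * L l / qnum q (of_nat (l+1)))"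
proof -
  define \<alpha> where "\<alpha> n = (1/q) ^ Suc n" for n
  have q1: "0 < 1/q" "1/q < 1" using q by (simp_all add: field_simps)
  have \<alpha>0: "0 < \<alpha> n" for n unfolding \<alpha>_def using q1 by simp
  have \<alpha>1: "\<alpha> n \<le> 1/q" for n
  proof -
    have "(1/q) ^ n \<le> 1" using q1 by (intro power_le_one) auto
    then have "(1/q) * (1/q) ^ n \<le> (1/q) * 1" using q1 by (intro mult_left_mono) auto
    then show ?thesis by (simp add: \<alpha>_def)
  qed
  define c where "c l = (-s) gchoose l" for l
  define T where "T = (UNIV :: nat set) \<times> ((UNIV :: nat set) \<times> I)"
  define t where "t = (\<lambda>(n::nat, l::nat, i). of_real ((q - 1) * \<alpha> n) *
      (w i * (c l * of_real (e * \<alpha> n) ^ l * of_real (B i) powr (- s - of_nat l))))"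
  define f1 where "f1 = (\<lambda>n. (q - 1) * \<alpha> n)"
  define f2 where "f2 l = norm (c l) * (1/q) ^ l" for l
  define f3 where "f3 = (\<lambda>i. norm (w i) * B i powr (- Re s))"
  define g where "g = (\<lambda>(n::nat, l::nat, i). f1 n * (f2 l * f3 i))"
  have f1pos: "f1 n \<ge> 0" for n using \<alpha>0[of n] q by (simp add: f1_def)
  have f2pos: "f2 l \<ge> 0" for l using q1 by (simp add: f2_def)
  have f3pos: "f3 i \<ge> 0" for i by (simp add: f3_def)
  have bound: "norm (t (n,l,i)) \<le> g (n,l,i)" if "i \<in> I" for n l i
  proof -
    have "\<bar>e\<bar> * \<alpha> n \<le> 1 * (1/q)" using e \<alpha>1[of n] \<alpha>0[of n] by (intro mult_mono) auto
    then have "(\<bar>e\<bar> * \<alpha> n) ^ l \<le> (1/q) ^ l" using \<alpha>0[of n] by (intro power_mono) auto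
    then have b1: "norm (of_real (e * \<alpha> n) ^ l :: complex) \<le> (1/q) ^ l"
      using \<alpha>0[of n] by (simp add: norm_power norm_mult abs_mult)
    have "norm (of_real (B i) powr (- s - of_nat l) :: complex) = B i powr (- Re s - of_nat l)"
      using B[OF that] by (subst norm_powr_real_powr) auto
    also have "\<dots> \<le> B i powr (- Re s)" using B[OF that] by (intro powr_mono) auto
    finally have b2: "norm (of_real (B i) powr (- s - of_nat l) :: complex) \<le> B i powr (- Re s)" .
    have "norm (t (n,l,i)) = f1 n * (norm (w i) * (norm (c l) * norm (of_real (e * \<alpha> n) ^ l :: complex)
             * norm (of_real (B i) powr (- s - of_nat l) :: complex)))"
    proof -
      have n1: "norm (complex_of_real ((q - 1) * \<alpha> n)) = f1 n"
        using f1pos[of n] unfolding f1_def norm_of_real by (rule abs_of_nonneg)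
      have "norm (t (n,l,i)) = norm (complex_of_real ((q - 1) * \<alpha> n)) * (norm (w i) * (norm (c l) * norm (of_real (e * \<alpha> n) ^ l :: complex)
             * norm (of_real (B i) powr (- s - of_nat l) :: complex)))"
        by (simp only: t_def prod.case norm_mult)
      then show ?thesis unfolding n1 .
    qed
    also have "\<dots> \<le> f1 n * (norm (w i) * (norm (c l) * (1/q) ^ l * B i powr (- Re s)))"
      using b1 b2 f1pos[of n] q1
      by (intro mult_left_mono mult_mono) auto
    also have "\<dots> = g (n,l,i)" by (simp add: g_def f2_def f3_def)
    finally show ?thesis .
  qed
  have f1s: "f1 summable_on UNIV"
  proof -
    have "((\<lambda>n. (q - 1) * ((1/q) ^ Suc n) ^ Suc 0) has_sum (1 / ((q ^ Suc 0 - 1) / (q - 1)))) UNIV"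
      by (rule jackson_geom[OF q])
    then show ?thesis unfolding f1_def \<alpha>_def by (auto simp: summable_on_def)
  qed
  have f2s: "f2 summable_on UNIV"
  proof -
    have "summable (\<lambda>l. norm (c l) * (1/q) ^ l)" unfolding c_def using q1 by (intro binom_norm_summable) auto
    moreover have "(\<lambda>l. norm (f2 l)) = (\<lambda>l. norm (c l) * (1/q)^l)"
      by (rule ext) (simp add: f2_def[symmetric] abs_of_nonneg f2pos)
    ultimately have "summable (\<lambda>l. norm (f2 l))" by simp
    then show ?thesis by (rule norm_summable_imp_summable_on)
  qed
  have f3s: "f3 summable_on I" using S by (simp add: f3_def)
  have g23: "(\<lambda>(l,i). f2 l * f3 i) summable_on UNIV \<times> I"
    by (rule prod_summable_nonneg[OF f2s f3s f2pos f3pos])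
  have gs: "g summable_on T"
  proof -
    have "(\<lambda>(n,p). f1 n * (\<lambda>(l,i). f2 l * f3 i) p) summable_on UNIV \<times> (UNIV \<times> I)"
      by (rule prod_summable_nonneg[OF f1s g23]) (auto simp: f1pos f2pos f3pos)
    then show ?thesis unfolding g_def T_def by (simp add: case_prod_unfold)
  qed
  have "(\<lambda>x. norm (t x)) summable_on T"
  proof (rule Infinite_Sum.abs_summable_on_comparison_test[where g = g])
    show "(\<lambda>x. norm (g x)) summable_on T"
      using gs by (rule summable_on_cong[THEN iffD1, rotated])
                  (auto simp: g_def T_def f1pos f2pos f3pos)
    show "norm (t x) \<le> norm (g x)" if "x \<in> T" for x
      using that bound[of "snd (snd x)" "fst x" "fst (snd x)"] f1pos f2pos f3pos
      by (auto simp: T_def g_def)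
  qed
  then have ts: "t summable_on T" by (rule abs_summable_summable)
  have sec: "(\<lambda>(l,i). t (n,l,i)) summable_on UNIV \<times> I" for n
  proof -
    have "(\<lambda>(x,y). (\<lambda>n p. t (n,p)) x y) summable_on Sigma UNIV (\<lambda>_. UNIV \<times> I)"
      using ts by (simp add: T_def case_prod_unfold)
    from summable_on_SigmaD1[OF this, of n] show ?thesis by (simp add: case_prod_unfold)
  qed
  have binom: "((\<lambda>l. t (n,l,i)) has_sum (of_real ((q-1) * \<alpha> n) * (w i / of_real (B i + e * \<alpha> n) powr s))) UNIV"
    if i: "i \<in> I" for n i
  proof -
    have lt: "\<bar>e * \<alpha> n\<bar> < \<bar>B i\<bar>"
    proof -
      have "\<bar>e * \<alpha> n\<bar> \<le> 1 * (1/q)" unfolding abs_mult using e \<alpha>1[of n] \<alpha>0[of n]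
        by (intro mult_mono) auto
      then show ?thesis using q1 B[OF i] by linarith
    qed
    have sm: "(\<lambda>l. c l * of_real (e * \<alpha> n) ^ l * of_real (B i) powr (- s - of_nat l)) sums
               of_real (e * \<alpha> n + B i) powr (- s)"
      using gen_binomial_complex'[OF lt, of "-s"] by (simp add: c_def)
    have "(\<lambda>l. t (n,l,i)) sums (of_real ((q-1) * \<alpha> n) * (w i * of_real (e * \<alpha> n + B i) powr (- s)))"
      unfolding t_def using sums_mult[OF sums_mult[OF sm, of "w i"], of "of_real ((q-1) * \<alpha> n)"]
      by simp
    moreover have "summable (\<lambda>l. norm (t (n,l,i)))"
    proof (rule summable_comparison_test)
      show "\<exists>N. \<forall>l\<ge>N. norm (norm (t (n,l,i))) \<le> g (n,l,i)" using bound[OF i] by auto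
      have "summable (\<lambda>l. f2 l)" using f2s summable_on_imp_summable by blast
      then show "summable (\<lambda>l. g (n,l,i))" unfolding g_def
        by (auto intro: summable_mult summable_mult2)
    qed
    ultimately have "((\<lambda>l. t (n,l,i)) has_sum (of_real ((q-1) * \<alpha> n) * (w i * of_real (e * \<alpha> n + B i) powr (- s)))) UNIV"
      by (intro norm_summable_imp_has_sum) auto
    moreover have "w i * of_real (e * \<alpha> n + B i) powr (- s) = w i / of_real (B i + e * \<alpha> n) powr s"
      by (simp add: powr_minus divide_inverse add.commute)
    ultimately show ?thesis by simp
  qed
  have jt: "jackson_term q G n = infsum (\<lambda>(l,i). t (n,l,i)) (UNIV \<times> I)" for n
  proof -
    have "jackson_term q G n = of_real ((q-1) * \<alpha> n) * G (\<alpha> n)"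
      unfolding jackson_term_def alpha_eq[OF order.strict_trans[OF zero_less_one q]] \<alpha>_def of_real_mult
      by (simp only: mult_ac)
    also have "\<dots> = infsum (\<lambda>i. of_real ((q-1) * \<alpha> n) * (w i / of_real (B i + e * \<alpha> n) powr s)) I"
      unfolding G_def by (rule infsum_cmult_right'[symmetric])
    also have "\<dots> = infsum (\<lambda>i. infsum (\<lambda>l. t (n,l,i)) UNIV) I"
      by (intro infsum_cong) (metis binom infsumI)
    also have "\<dots> = infsum (\<lambda>l. infsum (\<lambda>i. t (n,l,i)) I) UNIV"
      by (rule infsum_swap_banach[of "\<lambda>l i. t (n,l,i)", symmetric]) (use sec[of n] in simp)
    also have "\<dots> = infsum (\<lambda>(l,i). t (n,l,i)) (UNIV \<times> I)"
      using infsum_Sigma'_banach[of "\<lambda>l i. t (n,l,i)" UNIV "\<lambda>_. I"] sec[of n] by simp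
    finally show ?thesis .
  qed
  have JT: "jackson_term q G = (\<lambda>n. infsum (\<lambda>p. t (n,p)) (UNIV \<times> I))"
    using jt by (auto simp: case_prod_unfold)
  have tsig: "(\<lambda>(x,y). (\<lambda>n p. t (n,p)) x y) summable_on Sigma UNIV (\<lambda>_. UNIV \<times> I)"
    using ts by (simp add: T_def case_prod_unfold)
  have JS: "jackson_term q G summable_on UNIV"
    unfolding JT using summable_on_Sigma_banach[OF tsig] by simp
  have JI: "infsum (jackson_term q G) UNIV = infsum t T"
    unfolding JT using infsum_Sigma'_banach[OF tsig] by (simp add: T_def case_prod_unfold)
  define h where "h = (\<lambda>(l::nat, n::nat, i::'i). (n, l, i))"
  have hb: "bij_betw h T T"
    by (rule bij_betwI[of _ _ _ h]) (auto simp: h_def T_def)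
  have ths: "(\<lambda>x. t (h x)) summable_on T" using summable_on_reindex_bij_betw[OF hb, of t] ts by blast
  have thi: "infsum (\<lambda>x. t (h x)) T = infsum t T" by (rule infsum_reindex_bij_betw[OF hb])
  have thsig: "(\<lambda>(x,y). (\<lambda>l p. t (h (l,p))) x y) summable_on Sigma UNIV (\<lambda>_. UNIV \<times> I)"
    using ths by (simp add: T_def case_prod_unfold)
  define R where "R l = of_real e ^ l * ((-s) gchoose l) * L l / qnum q (of_nat (l+1))" for l
  have inner: "infsum (\<lambda>p. t (h (l,p))) (UNIV \<times> I) = R l" for l
  proof -
    have secl: "(\<lambda>(n,i). t (n,l,i)) summable_on UNIV \<times> I"
      using summable_on_SigmaD1[OF thsig, of l] by (simp add: h_def case_prod_unfold)
    have ii: "infsum (\<lambda>i. t (n,l,i)) I =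
        of_real e ^ l * c l * L l * of_real ((q - 1) * \<alpha> n ^ Suc l)" for n
    proof -
      have "infsum (\<lambda>i. t (n,l,i)) I = infsum (\<lambda>i. (of_real ((q - 1) * \<alpha> n) * c l * of_real (e * \<alpha> n) ^ l) *
              (w i / of_real (B i) powr (s + of_nat l))) I"
      proof (intro infsum_cong)
        fix i
        have pw: "(of_real (B i) :: complex) powr (- s - of_nat l) = inverse (of_real (B i) powr (s + of_nat l))"
          by (metis minus_add_distrib powr_minus diff_conv_add_uminus)
        show "t (n,l,i) = (of_real ((q - 1) * \<alpha> n) * c l * of_real (e * \<alpha> n) ^ l) *
              (w i / of_real (B i) powr (s + of_nat l))"
          unfolding t_def pw prod.case divide_inverse by (simp only: mult_ac)
      qed
      also have "\<dots> = (of_real ((q - 1) * \<alpha> n) * c l * of_real (e * \<alpha> n) ^ l) * L l"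
        unfolding L_def by (rule infsum_cmult_right')
      also have "\<dots> = of_real e ^ l * c l * L l * of_real ((q - 1) * \<alpha> n ^ Suc l)"
        unfolding of_real_mult of_real_power power_mult_distrib power_Suc
        by (simp only: mult_ac)
      finally show ?thesis .
    qed
    have "infsum (\<lambda>p. t (h (l,p))) (UNIV \<times> I) = infsum (\<lambda>n. infsum (\<lambda>i. t (n,l,i)) I) UNIV"
      using infsum_Sigma'_banach[of "\<lambda>n i. t (n,l,i)" UNIV "\<lambda>_. I"] secl
      by (simp add: h_def case_prod_unfold)
    also have "\<dots> = infsum (\<lambda>n. of_real e ^ l * c l * L l * of_real ((q - 1) * \<alpha> n ^ Suc l)) UNIV"
      using ii by simp
    also have "\<dots> = of_real e ^ l * c l * L l * infsum (\<lambda>n. of_real ((q - 1) * \<alpha> n ^ Suc l)) UNIV"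
      by (rule infsum_cmult_right')
    also have "infsum (\<lambda>n. of_real ((q - 1) * \<alpha> n ^ Suc l) :: complex) UNIV
               = of_real (1 / ((q ^ Suc l - 1) / (q - 1)))"
      unfolding \<alpha>_def by (rule infsumI, rule has_sum_of_real, rule jackson_geom[OF q])
    also have "of_real (1 / ((q ^ Suc l - 1) / (q - 1))) = 1 / qnum q (of_nat (l+1))"
      using qnum_nat[OF q, of "l+1"] by simp
    finally show ?thesis by (simp add: R_def c_def)
  qed
  have RS: "R summable_on UNIV"
    using summable_on_Sigma_banach[OF thsig] inner by simp
  have RI: "infsum R UNIV = infsum t T"
    using infsum_Sigma'_banach[OF thsig] inner thi by (simp add: T_def case_prod_unfold)
  show ?thesis
    using suminf_infsum_nat[OF JS] suminf_infsum_nat[OF RS] JI RI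
    unfolding jackson_integrable_def jackson_integral_def R_def by simp
qed



definition cntP :: "(nat \<Rightarrow> bool) \<Rightarrow> nat \<Rightarrow> nat \<Rightarrow> nat" where
  "cntP P k N = card {m. length m = k \<and> (\<forall>x\<in>set m. P x) \<and> sum_list m = N}"

lemma fin_fib: "finite {m :: nat list. length m = k \<and> Q m \<and> sum_list m = N}"
proof (rule finite_subset[OF _ finite_lists_length_eq[of "{0..N}" k]])
  show "{m. length m = k \<and> Q m \<and> sum_list m = N} \<subseteq> {xs. set xs \<subseteq> {0..N} \<and> length xs = k}"
    using member_le_sum_list by fastforce
qed simp

lemma fin_fib': fixes A :: "nat list set" assumes "A \<subseteq> {m. length m = k}" shows "finite {m \<in> A. sum_list m = N}"
  by (rule finite_subset[OF _ fin_fib[of k "\<lambda>_. True" N]]) (use assms in auto)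

lemma card_fib_le:
  assumes "k \<ge> 1"
  shows "card {m. length m = k \<and> sum_list m = N} \<le> (N+1)^(k-1)"
proof -
  let ?S = "{m. length m = k \<and> sum_list m = N}"
  let ?T = "{xs. set xs \<subseteq> {0..N} \<and> length xs = k - 1}"
  have inj: "inj_on tl ?S"
  proof (rule inj_onI)
    fix x y assume x: "x \<in> ?S" and y: "y \<in> ?S" and e: "tl x = tl y"
    from x assms obtain a x' where xa: "x = a # x'" by (cases x) auto
    from y assms obtain b y' where yb: "y = b # y'" by (cases y) auto
    show "x = y" using x y e xa yb by auto
  qed
  have "tl ` ?S \<subseteq> ?T"
  proof
    fix t assume "t \<in> tl ` ?S"
    then obtain m where m: "m \<in> ?S" "t = tl m" by auto
    have "set (tl m) \<subseteq> set m" by (cases m) auto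
    then have "set t \<subseteq> {0..N}" using m member_le_sum_list by fastforce
    then show "t \<in> ?T" using m by simp
  qed
  then have "card (tl ` ?S) \<le> card ?T" by (intro card_mono finite_lists_length_eq) auto
  then show ?thesis using card_image[OF inj] card_lists_length_eq[of "{0..N}" "k-1"] by simp
qed

lemma cntP_Suc:
  "cntP P (Suc k) N = (\<Sum>n\<le>N. if P n then cntP P k (N - n) else 0)"
proof -
  let ?S = "{m. length m = Suc k \<and> (\<forall>x\<in>set m. P x) \<and> sum_list m = N}"
  let ?A = "{n\<in>{..N}. P n}"
  let ?B = "\<lambda>n. {m. length m = k \<and> (\<forall>x\<in>set m. P x) \<and> sum_list m = N - n}"
  have "bij_betw (\<lambda>m. (hd m, tl m)) ?S (Sigma ?A ?B)"
  proof (rule bij_betwI[where g = "\<lambda>(n,m). n # m"])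
    show "(\<lambda>m. (hd m, tl m)) \<in> ?S \<rightarrow> Sigma ?A ?B"
    proof
      fix m assume "m \<in> ?S"
      then obtain a m' where "m = a # m'" by (cases m) auto
      with \<open>m \<in> ?S\<close> show "(hd m, tl m) \<in> Sigma ?A ?B" by auto
    qed
    show "(\<lambda>(n,m). n # m) \<in> Sigma ?A ?B \<rightarrow> ?S" by auto
    show "(case (hd m, tl m) of (n,m) \<Rightarrow> n # m) = m" if "m \<in> ?S" for m
      using that by (cases m) auto
    show "(hd (case y of (n,m) \<Rightarrow> n # m), tl (case y of (n,m) \<Rightarrow> n # m)) = y" for y
      by (cases y) auto
  qed
  then have "cntP P (Suc k) N = card (Sigma ?A ?B)"
    unfolding cntP_def by (rule bij_betw_same_card)
  also have "\<dots> = (\<Sum>n\<in>?A. card (?B n))"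
    by (rule card_SigmaI) (auto intro: fin_fib)
  also have "\<dots> = (\<Sum>n\<le>N. if P n then card (?B n) else 0)"
    by (rule sum.inter_filter) simp
  also have "\<dots> = (\<Sum>n\<le>N. if P n then cntP P k (N - n) else 0)"
    unfolding cntP_def by (rule refl)
  finally show ?thesis .
qed

lemma pascal_sum:
  fixes a :: "nat \<Rightarrow> nat"
  shows "(\<Sum>j\<le>Suc k. (Suc k choose j) * a j) = (\<Sum>j\<le>k. (k choose j) * (a j + a (Suc j)))"
proof -
  have "(\<Sum>j\<le>Suc k. (Suc k choose j) * a j) =
        (\<Sum>j\<le>Suc k. (k choose j) * a j) + (\<Sum>j\<le>Suc k. (if j = 0 then 0 else (k choose (j - 1)) * a j))"
    by (subst sum.distrib[symmetric], rule sum.cong) (auto split: nat.splits simp: algebra_simps dest!: gr0_implies_Suc)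
  also have "(\<Sum>j\<le>Suc k. (k choose j) * a j) = (\<Sum>j\<le>k. (k choose j) * a j)"
    by simp
  also have "(\<Sum>j\<le>Suc k. (if j = 0 then 0 else (k choose (j - 1)) * a j)) = (\<Sum>j\<le>k. (k choose j) * a (Suc j))"
    by (subst sum.atMost_Suc_shift) simp
  finally show ?thesis by (simp add: sum.distrib algebra_simps)
qed

lemma cnt_identity:
  "cntP (\<lambda>_. True) k N = (\<Sum>j\<le>k. (k choose j) * cntP (\<lambda>x. 1 \<le> x) j N)"
proof (induction k arbitrary: N)
  case 0
  have e: "{m::nat list. length m = 0 \<and> (\<forall>x\<in>set m. P x) \<and> sum_list m = N} = (if N = 0 then {[]} else {})" for P
    by auto
  show ?case unfolding cntP_def using e[of "\<lambda>_. True"] e[of "\<lambda>x. 1 \<le> x"] by simp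
next
  case (Suc k)
  define a where "a j = cntP (\<lambda>x. 1 \<le> x) j N" for j
  have sh: "(\<Sum>n\<le>N. cntP (\<lambda>x. 1 \<le> x) j (N - n)) = a j + a (Suc j)" for j
  proof -
    have "(\<Sum>n\<le>N. cntP (\<lambda>x. 1 \<le> x) j (N - n)) =
          (\<Sum>n\<le>N. (if n = 0 then cntP (\<lambda>x. 1 \<le> x) j (N - n) else 0) + (if 1 \<le> n then cntP (\<lambda>x. 1 \<le> x) j (N - n) else 0))"
      by (rule sum.cong) auto
    also have "\<dots> = a j + a (Suc j)"
      by (simp only: sum.distrib cntP_Suc a_def) simp
    finally show ?thesis .
  qed
  have "cntP (\<lambda>_. True) (Suc k) N = (\<Sum>n\<le>N. \<Sum>j\<le>k. (k choose j) * cntP (\<lambda>x. 1 \<le> x) j (N - n))"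
    by (simp add: cntP_Suc Suc.IH)
  also have "\<dots> = (\<Sum>j\<le>k. (k choose j) * (\<Sum>n\<le>N. cntP (\<lambda>x. 1 \<le> x) j (N - n)))"
    by (subst sum.swap) (simp add: sum_distrib_left)
  also have "\<dots> = (\<Sum>j\<le>k. (k choose j) * (a j + a (Suc j)))" by (simp only: sh)
  also have "\<dots> = (\<Sum>j\<le>Suc k. (Suc k choose j) * a j)" by (rule pascal_sum[symmetric])
  finally show ?case by (simp add: a_def)
qed

lemma cnt_identity_r:
  assumes "N \<ge> 1"
  shows "cntP (\<lambda>_. True) k N = (\<Sum>r<k. (k choose r) * cntP (\<lambda>x. 1 \<le> x) (k - r) N)"
proof -
  define a where "a j = cntP (\<lambda>x. 1 \<le> x) j N" for j
  have a0: "a 0 = 0" using assms by (simp add: a_def cntP_def)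
  have "(\<Sum>r<k. (k choose r) * a (k - r)) = (\<Sum>i<k. (k choose (k - Suc i)) * a (Suc i))"
    by (subst sum.nat_diff_reindex[symmetric]) (rule sum.cong, auto simp: Suc_diff_Suc)
  also have "\<dots> = (\<Sum>i<k. (k choose Suc i) * a (Suc i))"
    by (rule sum.cong) (auto simp: binomial_symmetric[symmetric])
  also have "\<dots> = (\<Sum>j\<le>k. (k choose j) * a j)"
  proof (cases k)
    case 0 then show ?thesis by (simp add: a0)
  next
    case (Suc k')
    then show ?thesis by (simp only: sum.atMost_Suc_shift lessThan_Suc_atMost) (simp add: a0)
  qed
  finally show ?thesis using cnt_identity[of k N] by (simp add: a_def)
qed



lemma group_infsum:
  fixes h :: "nat \<Rightarrow> complex" and A :: "nat list set"
  assumes fin: "\<And>N. finite {m\<in>A. sum_list m = N}"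
    and sm: "(\<lambda>m. h (sum_list m)) summable_on A"
  shows "(\<lambda>N. of_nat (card {m\<in>A. sum_list m = N}) * h N) summable_on UNIV"
    and "infsum (\<lambda>m. h (sum_list m)) A = infsum (\<lambda>N. of_nat (card {m\<in>A. sum_list m = N}) * h N) UNIV"
proof -
  define F where "F N = {m\<in>A. sum_list m = N}" for N
  have bij: "bij_betw (\<lambda>m. (sum_list m, m)) A (Sigma UNIV F)"
    by (rule bij_betwI[where g = snd]) (auto simp: F_def)
  have s1: "(\<lambda>p. h (fst p)) summable_on Sigma UNIV F"
    using summable_on_reindex_bij_betw[OF bij, of "\<lambda>p. h (fst p)"] sm by simp
  have s2: "(\<lambda>(x,y). (\<lambda>N m. h N) x y) summable_on Sigma UNIV F" using s1 by (simp add: case_prod_unfold)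
  have fib: "infsum (\<lambda>m. h N) (F N) = of_nat (card (F N)) * h N" for N
    unfolding F_def by (rule infsumI[OF has_sum_constant[OF fin]])
  show "(\<lambda>N. of_nat (card {m\<in>A. sum_list m = N}) * h N) summable_on UNIV"
    using summable_on_Sigma_banach[OF s2] fib by (simp add: F_def)
  have "infsum (\<lambda>m. h (sum_list m)) A = infsum (\<lambda>p. h (fst p)) (Sigma UNIV F)"
    using infsum_reindex_bij_betw[OF bij, of "\<lambda>p. h (fst p)"] by simp
  also have "\<dots> = infsum (\<lambda>N. infsum (\<lambda>m. h N) (F N)) UNIV"
    using infsum_Sigma'_banach[OF s2] by (simp add: case_prod_unfold)
  finally show "infsum (\<lambda>m. h (sum_list m)) A = infsum (\<lambda>N. of_nat (card {m\<in>A. sum_list m = N}) * h N) UNIV"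
    using fib by (simp add: F_def)
qed

lemma group_summable_real:
  fixes h :: "nat \<Rightarrow> real" and A :: "nat list set"
  assumes fin: "\<And>N. finite {m\<in>A. sum_list m = N}"
    and pos: "\<And>N. h N \<ge> 0"
    and sm: "(\<lambda>N. real (card {m\<in>A. sum_list m = N}) * h N) summable_on UNIV"
  shows "(\<lambda>m. h (sum_list m)) summable_on A"
proof -
  define F where "F N = {m\<in>A. sum_list m = N}" for N
  have bij: "bij_betw (\<lambda>m. (sum_list m, m)) A (Sigma UNIV F)"
    by (rule bij_betwI[where g = snd]) (auto simp: F_def)
  have "(\<lambda>p. h (fst p)) summable_on Sigma UNIV F"
  proof (rule summable_on_SigmaI[where g = "\<lambda>N. real (card (F N)) * h N"])
    fix N :: nat
    show "((\<lambda>y. h (fst (N, y))) has_sum real (card (F N)) * h N) (F N)"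
      using has_sum_constant[OF fin[of N], of "h N"] by (simp add: F_def)
  qed (use sm pos in \<open>auto simp: F_def\<close>)
  then show ?thesis
    using summable_on_reindex_bij_betw[OF bij, of "\<lambda>p. h (fst p)"] by simp
qed

lemma poly_geom_lim:
  fixes r a b d :: real
  assumes "0 < r" "r < 1"
  shows "(\<lambda>N. (real N + 1) powr a * (real N + d) powr b * r ^ N) \<longlonglongrightarrow> 0"
  using assms by real_asymp

lemma poly_geom_summable:
  fixes x a b d :: real
  assumes "0 \<le> x" "x < 1"
  shows "summable (\<lambda>N. (real N + 1) powr a * (real N + d) powr b * x ^ N)"
proof -
  define P where "P N = (real N + 1) powr a * (real N + d) powr b" for N
  define y1 where "y1 = (1 + x) / 2"
  define y2 where "y2 = (1 + y1) / 2"
  have y: "x \<le> y1" "0 < y1" "y1 < y2" "y2 < 1" using assms by (auto simp: y1_def y2_def)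
  have "(\<lambda>N. P N * (y1 / y2) ^ N) \<longlonglongrightarrow> 0"
    unfolding P_def by (rule poly_geom_lim) (use y in auto)
  then have ev: "eventually (\<lambda>N. P N * (y1 / y2) ^ N < 1) sequentially"
    by (rule order_tendstoD) simp
  show ?thesis unfolding P_def[symmetric]
  proof (rule summable_comparison_test_ev[OF _ summable_geometric[of y2]])
    show "eventually (\<lambda>N. norm (P N * x ^ N) \<le> y2 ^ N) sequentially"
      using ev
    proof eventually_elim
      case (elim N)
      have P0: "P N \<ge> 0" by (simp add: P_def)
      have "norm (P N * x ^ N) = P N * x ^ N" using P0 assms by simp
      also have "\<dots> \<le> P N * y1 ^ N" using P0 y assms by (intro mult_left_mono power_mono) auto
      also have "\<dots> = (P N * (y1 / y2) ^ N) * y2 ^ N" using y by (simp add: power_divide)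
      also have "\<dots> \<le> 1 * y2 ^ N" using elim y by (intro mult_right_mono) auto
      finally show ?case by simp
    qed
  qed (use y in auto)
qed

lemma card_fib_le_real:
  assumes "k \<ge> 1"
  shows "real (card {m \<in> {m. length m = k}. sum_list m = N}) \<le> (real N + 1) powr real (k - 1)"
proof -
  have "{m \<in> {m. length m = k}. sum_list m = N} = {m. length m = k \<and> sum_list m = N}" by auto
  then have "card {m \<in> {m. length m = k}. sum_list m = N} \<le> (N+1)^(k-1)"
    using card_fib_le[OF assms, of N] by simp
  then have "real (card {m \<in> {m. length m = k}. sum_list m = N}) \<le> real ((N+1)^(k-1))"
    by (simp only: of_nat_le_iff)
  also have "\<dots> = (real N + 1) ^ (k - 1)" by (simp add: add.commute)
  also have "\<dots> = (real N + 1) powr real (k - 1)"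
    by (subst powr_realpow) auto
  finally show ?thesis .
qed

lemma list_sum_lt1:
  fixes x c d :: real
  assumes "0 \<le> x" "x < 1" "k \<ge> 1"
  shows "(\<lambda>m. x ^ sum_list m * (real (sum_list m) + d) powr c) summable_on {m. length m = k}"
proof (rule group_summable_real)
  show "finite {m \<in> {m. length m = k}. sum_list m = N}" for N :: nat by (rule fin_fib'[of _ k]) auto
  show "0 \<le> x ^ N * (real N + d) powr c" for N using assms by simp
  have "(\<lambda>N. (real N + 1) powr real (k - 1) * (real N + d) powr c * x ^ N) summable_on UNIV"
  proof (rule norm_summable_imp_summable_on)
    show "summable (\<lambda>N. norm ((real N + 1) powr real (k - 1) * (real N + d) powr c * x ^ N))"
      using poly_geom_summable[OF assms(1,2), of "real (k - 1)" d c] assms by simp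
  qed
  then show "(\<lambda>N. real (card {m \<in> {m. length m = k}. sum_list m = N}) * (x ^ N * (real N + d) powr c)) summable_on UNIV"
  proof (rule summable_on_comparison_test)
    fix N :: nat
    show "0 \<le> real (card {m \<in> {m. length m = k}. sum_list m = N}) * (x ^ N * (real N + d) powr c)"
      using assms by simp
    have "real (card {m \<in> {m. length m = k}. sum_list m = N}) * (x ^ N * (real N + d) powr c)
          \<le> (real N + 1) powr real (k - 1) * (x ^ N * (real N + d) powr c)"
      using card_fib_le_real[OF assms(3)] assms by (intro mult_right_mono) auto
    then show "real (card {m \<in> {m. length m = k}. sum_list m = N}) * (x ^ N * (real N + d) powr c)
          \<le> (real N + 1) powr real (k - 1) * (real N + d) powr c * x ^ N"
      by (simp add: mult_ac)
  qed
qed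

lemma list_sum_eq1:
  fixes d \<sigma> :: real
  assumes "k \<ge> 1" "d \<ge> 1" "\<sigma> > real k"
  shows "(\<lambda>m. (real (sum_list m) + d) powr (- \<sigma>)) summable_on {m. length m = k}"
proof (rule group_summable_real)
  show "finite {m \<in> {m. length m = k}. sum_list m = N}" for N :: nat by (rule fin_fib'[of _ k]) auto
  show "0 \<le> (real N + d) powr (- \<sigma>)" for N by simp
  define p where "p = real (k - 1) - \<sigma>"
  have p: "p < -1" using assms by (simp add: p_def of_nat_diff)
  have "summable (\<lambda>N. real (Suc N) powr p)"
    using summable_real_powr_iff[of p] p summable_Suc_iff[of "\<lambda>n. real n powr p"] by simp
  then have "(\<lambda>N. (real N + 1) powr p) summable_on UNIV"
    by (intro norm_summable_imp_summable_on) (simp add: add.commute)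
  then show "(\<lambda>N. real (card {m \<in> {m. length m = k}. sum_list m = N}) * (real N + d) powr (- \<sigma>)) summable_on UNIV"
  proof (rule summable_on_comparison_test)
    fix N :: nat
    show "0 \<le> real (card {m \<in> {m. length m = k}. sum_list m = N}) * (real N + d) powr (- \<sigma>)" by simp
    have "real (card {m \<in> {m. length m = k}. sum_list m = N}) * (real N + d) powr (- \<sigma>)
          \<le> (real N + 1) powr real (k - 1) * (real N + 1) powr (- \<sigma>)"
      using card_fib_le_real[OF assms(1)] assms
      by (intro mult_mono powr_mono2') auto
    also have "\<dots> = (real N + 1) powr p" by (simp add: p_def powr_add[symmetric])
    finally show "real (card {m \<in> {m. length m = k}. sum_list m = N}) * (real N + d) powr (- \<sigma>) \<le> (real N + 1) powr p" .
  qed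
qed

lemma shift_bound:
  fixes B a \<sigma> :: real
  assumes "B \<ge> 1" "0 \<le> a" "a \<le> 1"
  shows "(B + a) powr (- \<sigma>) \<le> 2 powr \<bar>\<sigma>\<bar> * B powr (- \<sigma>)"
proof (cases "\<sigma> \<ge> 0")
  case True
  have "(B + a) powr (- \<sigma>) \<le> B powr (- \<sigma>)" using assms True by (intro powr_mono2') auto
  also have "\<dots> \<le> 2 powr \<bar>\<sigma>\<bar> * B powr (- \<sigma>)"
  proof -
    have "(1::real) \<le> 2 powr \<bar>\<sigma>\<bar>" by (rule ge_one_powr_ge_zero) auto
    from mult_right_mono[OF this, of "B powr (- \<sigma>)"] show ?thesis by simp
  qed
  finally show ?thesis .
next
  case False
  have "(B + a) powr (- \<sigma>) \<le> (2 * B) powr (- \<sigma>)" using assms False by (intro powr_mono2) auto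
  also have "\<dots> = 2 powr \<bar>\<sigma>\<bar> * B powr (- \<sigma>)" using False assms by (simp add: powr_mult)
  finally show ?thesis .
qed



lemma sum_list_map_Suc: "sum_list (map Suc m) = sum_list m + length m"
  by (induction m) auto

lemma LL_shift:
  fixes z t :: complex
  shows "multi_LL_zeta k z t =
         z ^ k * infsum (\<lambda>m. z ^ sum_list m / of_nat (sum_list m + k) powr t) {m. length m = k}"
proof -
  let ?A = "{m::nat list. length m = k}"
  let ?P = "{m::nat list. length m = k \<and> (\<forall>i\<in>set m. 1 \<le> i)}"
  have bij: "bij_betw (map Suc) ?A ?P"
  proof (rule bij_betwI[where g = "map (\<lambda>x. x - 1)"])
    show "map Suc \<in> ?A \<rightarrow> ?P" by auto
    show "map (\<lambda>x. x - 1) \<in> ?P \<rightarrow> ?A" by auto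
    show "map (\<lambda>x. x - 1) (map Suc x) = x" for x by (simp add: map_idI)
    show "map Suc (map (\<lambda>x. x - 1) y) = y" if "y \<in> ?P" for y
      using that by (auto intro!: map_idI)
  qed
  have "multi_LL_zeta k z t = infsum (\<lambda>m. z ^ sum_list (map Suc m) / of_nat (sum_list (map Suc m)) powr t) ?A"
    unfolding multi_LL_zeta_def
    using infsum_reindex_bij_betw[OF bij, of "\<lambda>m. z ^ sum_list m / of_nat (sum_list m) powr t"] by simp
  also have "\<dots> = infsum (\<lambda>m. z ^ k * (z ^ sum_list m / of_nat (sum_list m + k) powr t)) ?A"
    by (intro infsum_cong) (simp add: sum_list_map_Suc power_add mult_ac)
  also have "\<dots> = z ^ k * infsum (\<lambda>m. z ^ sum_list m / of_nat (sum_list m + k) powr t) ?A"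
    by (rule infsum_cmult_right')
  finally show ?thesis .
qed

lemma norm_h:
  fixes z t :: complex
  shows "norm (z ^ N / (of_nat N :: complex) powr t) = norm z ^ N * real N powr (- Re t)"
proof -
  have "norm ((of_nat N :: complex) powr t) = real N powr Re t"
    by (subst norm_powr_real_powr) auto
  then show ?thesis by (simp add: norm_divide norm_power powr_minus_divide)
qed

lemma part2:
  fixes q e :: real and k :: nat and z s :: complex
  assumes q: "q > 1" and k: "k > 0" and z0: "z \<noteq> 0"
    and zc: "norm z < 1 \<or> (norm z = 1 \<and> Re s > real k)" and e: "\<bar>e\<bar> \<le> 1"
  defines "F \<equiv> \<lambda>a. multi_HL_zeta k z s (of_nat k + of_real e * of_real a)"
  shows "jackson_integrable q F \<and>
    summable (\<lambda>l. of_real e ^ l * ((- s) gchoose l) * multi_LL_zeta k z (s + of_nat l) / qnum q (of_nat (l + 1))) \<and>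
    jackson_integral q F = z powi (- int k) *
      (\<Sum>l. of_real e ^ l * ((- s) gchoose l) * multi_LL_zeta k z (s + of_nat l) / qnum q (of_nat (l + 1)))"
proof -
  let ?A = "{m::nat list. length m = k}"
  define w where "w = (\<lambda>m::nat list. z ^ sum_list m)"
  define B where "B = (\<lambda>m::nat list. real (sum_list m + k))"
  have B1: "B m \<ge> 1" for m using k by (simp add: B_def)
  have S: "(\<lambda>m. norm (w m) * B m powr (- Re s)) summable_on ?A"
  proof (cases "norm z < 1")
    case True
    from list_sum_lt1[of "norm z" k "real k" "- Re s"] True k
    show ?thesis by (simp add: w_def B_def norm_power)
  next
    case False
    with zc have z1: "norm z = 1" and sk: "Re s > real k" by auto
    from list_sum_eq1[of k "real k" "Re s"] k sk
    show ?thesis by (simp add: w_def B_def norm_power z1)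
  qed
  note C = core[OF q e, of ?A B w s, OF B1 S]
  define G where "G = (\<lambda>a. infsum (\<lambda>i. w i / of_real (B i + e * a) powr s) ?A)"
  define L where "L = (\<lambda>l. infsum (\<lambda>i. w i / of_real (B i) powr (s + of_nat l)) ?A)"
  have FG: "F = G"
    unfolding F_def G_def multi_HL_zeta_def w_def B_def
    by (intro ext infsum_cong) (simp add: algebra_simps)
  have LL: "multi_LL_zeta k z (s + of_nat l) = z ^ k * L l" for l
    unfolding LL_shift L_def w_def B_def by simp
  define R where "R l = of_real e ^ l * ((-s) gchoose l) * L l / qnum q (of_nat (l+1))" for l
  have C': "jackson_integrable q F \<and> summable R \<and> jackson_integral q F = (\<Sum>l. R l)"
    using C unfolding FG G_def L_def R_def by simp
  have T: "(\<lambda>l. of_real e ^ l * ((- s) gchoose l) * multi_LL_zeta k z (s + of_nat l) / qnum q (of_nat (l + 1)))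
        = (\<lambda>l. z ^ k * R l)"
    by (rule ext) (simp add: LL R_def)
  have zk: "z powi (- int k) * z ^ k = 1" using z0 by (simp add: power_int_minus)
  show ?thesis
    unfolding T using C' summable_mult[of R "z ^ k"] suminf_mult[of R "z ^ k"]
    by (simp add: mult.assoc[symmetric] zk)
qed

lemma jackson_Z0:
  fixes q :: real and s :: complex
  assumes q: "q > 1" and s: "Re s < 1"
  shows "(\<lambda>n. jackson_term q (\<lambda>a. 1 / of_real a powr s) n) sums (1 / qnum q (1 - s))"
proof -
  define \<rho> where "\<rho> = exp ((s - 1) * of_real (ln q))"
  have lq: "ln q > 0" using q by simp
  have n\<rho>: "norm \<rho> < 1"
    using lq s by (simp add: \<rho>_def norm_exp_eq_Re mult_neg_pos)
  have \<rho>0: "\<rho> \<noteq> 0" by (simp add: \<rho>_def)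
  have \<rho>1: "\<rho> \<noteq> 1" using n\<rho> by auto
  have jt: "jackson_term q (\<lambda>a. 1 / of_real a powr s) n = of_real (q - 1) * \<rho> ^ Suc n" for n
  proof -
    define x where "x = q powr (- real (Suc n))"
    have x0: "x > 0" using q by (simp add: x_def)
    have "1 / (of_real x :: complex) powr s * of_real x = of_real x powr (1 - s)"
      using x0 by (simp add: powr_diff)
    also have "\<dots> = exp ((1 - s) * of_real (ln x))"
      using x0 by (simp add: powr_def Ln_of_real)
    also have "(1 - s) * of_real (ln x) = of_nat (Suc n) * ((s - 1) * of_real (ln q))"
      using q by (simp add: x_def algebra_simps)
    also have "exp (of_nat (Suc n) * ((s - 1) * of_real (ln q))) = \<rho> ^ Suc n"
      unfolding \<rho>_def by (rule exp_of_nat_mult)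
    finally have fx: "1 / (of_real x :: complex) powr s * of_real x = \<rho> ^ Suc n" .
    show ?thesis unfolding jackson_term_def x_def[symmetric] using fx by (simp only: mult.assoc)
  qed
  have "(\<lambda>n. of_real (q - 1) * \<rho> * \<rho> ^ n) sums (of_real (q - 1) * \<rho> * (1 / (1 - \<rho>)))"
    by (intro sums_mult geometric_sums n\<rho>)
  moreover have "of_real (q - 1) * \<rho> * (1 / (1 - \<rho>)) = 1 / qnum q (1 - s)"
  proof -
    have qp: "(of_real q :: complex) powr (1 - s) = 1 / \<rho>"
      using q by (simp add: powr_def Ln_of_real \<rho>_def exp_minus[symmetric] divide_inverse algebra_simps)
    have q1: "(of_real q :: complex) - 1 \<noteq> 0" using q
      by (metis eq_iff_diff_eq_0 less_irrefl of_real_eq_1_iff)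
    have "1 - \<rho> \<noteq> 0" using \<rho>1 by auto
    then show ?thesis unfolding qnum_def qp using \<rho>0 q1
      by (simp add: field_simps)
  qed
  ultimately show ?thesis unfolding jt by (simp add: mult.assoc)
qed



lemma has_sum_finsum:
  fixes f :: "'r \<Rightarrow> 'a \<Rightarrow> complex"
  assumes "finite R" "\<And>r. r \<in> R \<Longrightarrow> f r summable_on A"
  shows "((\<lambda>x. \<Sum>r\<in>R. f r x) has_sum (\<Sum>r\<in>R. infsum (f r) A)) A"
  using assms
proof (induction R rule: finite_induct)
  case empty
  then show ?case by simp
next
  case (insert a F)
  have "((\<lambda>x. f a x + (\<Sum>r\<in>F. f r x)) has_sum (infsum (f a) A + (\<Sum>r\<in>F. infsum (f r) A))) A"
    by (intro has_sum_add) (use insert in \<open>auto simp: has_sum_infsum\<close>)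
  then show ?case using insert by simp
qed

lemma sum_ge_length: "\<forall>i\<in>set m. 1 \<le> i \<Longrightarrow> length m \<le> sum_list m"
  by (induction m) auto

lemma part1:
  fixes q :: real and k :: nat and z s :: complex
  assumes q: "q > 1" and k: "k > 0" and z1: "norm z < 1" and s1: "Re s < 1"
  shows "jackson_integrable q (\<lambda>a. multi_HL_zeta k z s (of_real a)) \<and>
      (\<forall>r<k. summable (\<lambda>l. ((- s) gchoose l) * multi_LL_zeta (k - r) z (s + of_nat l)
                               / qnum q (of_nat (l + 1)))) \<and>
      jackson_integral q (\<lambda>a. multi_HL_zeta k z s (of_real a)) =
        1 / qnum q (1 - s) +
        (\<Sum>r<k. of_nat (k choose r) *
           (\<Sum>l. ((- s) gchoose l) * multi_LL_zeta (k - r) z (s + of_nat l)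
                   / qnum q (of_nat (l + 1))))"
proof -
  let ?A = "{m::nat list. length m = k}"
  define I where "I = {m::nat list. length m = k \<and> 0 < sum_list m}"
  define P where "P j = {m::nat list. length m = j \<and> (\<forall>i\<in>set m. 1 \<le> i)}" for j
  define w where "w = (\<lambda>m::nat list. z ^ sum_list m)"
  define B where "B = (\<lambda>m::nat list. real (sum_list m))"
  have IA: "I \<subseteq> ?A" by (auto simp: I_def)
  have PA: "P j \<subseteq> {m. length m = j}" for j by (auto simp: P_def)
  have SA: "(\<lambda>m. norm z ^ sum_list m * (real (sum_list m)) powr c) summable_on {m. length m = j}"
    if "j \<ge> 1" for c j
    using list_sum_lt1[of "norm z" j 0 c] z1 that by simp
  have SI: "(\<lambda>m. norm (w m) * B m powr (- Re s)) summable_on I"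
  proof -
    have "(\<lambda>m. norm z ^ sum_list m * (real (sum_list m)) powr (- Re s)) summable_on ?A"
      using SA[of k] k by simp
    then have "(\<lambda>m. norm z ^ sum_list m * (real (sum_list m)) powr (- Re s)) summable_on I"
      by (rule summable_on_subset[OF _ IA])
    then show ?thesis by (simp add: w_def B_def norm_power)
  qed
  have BI: "B m \<ge> 1" if "m \<in> I" for m using that by (auto simp: I_def B_def)
  define GI where "GI = (\<lambda>a. infsum (\<lambda>i. w i / of_real (B i + 1 * a) powr s) I)"
  define LI where "LI = (\<lambda>l. infsum (\<lambda>i. w i / of_real (B i) powr (s + of_nat l)) I)"
  have CI: "jackson_integrable q GI \<and>
         summable (\<lambda>l. of_real (1::real) ^ l * ((-s) gchoose l) * LI l / qnum q (of_nat (l+1))) \<and>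
         jackson_integral q GI = (\<Sum>l. of_real (1::real) ^ l * ((-s) gchoose l) * LI l / qnum q (of_nat (l+1)))"
    unfolding GI_def LI_def by (rule core[OF q _ BI SI]) simp
  have CP: "summable (\<lambda>l. ((-s) gchoose l) * multi_LL_zeta j z (s + of_nat l) / qnum q (of_nat (l+1)))"
    if j: "1 \<le> j" for j
  proof -
    have BP: "B m \<ge> 1" if "m \<in> P j" for m
      using that j sum_ge_length[of m] by (auto simp: P_def B_def)
    have SP: "(\<lambda>m. norm (w m) * B m powr (- Re s)) summable_on P j"
    proof -
      have "(\<lambda>m. norm z ^ sum_list m * (real (sum_list m)) powr (- Re s)) summable_on P j"
        by (rule summable_on_subset[OF SA[OF j] PA])
      then show ?thesis by (simp add: w_def B_def norm_power)
    qed
    have "summable (\<lambda>l. of_real (1::real) ^ l * ((-s) gchoose l) *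
            infsum (\<lambda>i. w i / of_real (B i) powr (s + of_nat l)) (P j) / qnum q (of_nat (l+1)))"
      using core[OF q _ BP SP, of 1] by simp
    moreover have "infsum (\<lambda>i. w i / of_real (B i) powr (s + of_nat l)) (P j) = multi_LL_zeta j z (s + of_nat l)" for l
      unfolding multi_LL_zeta_def P_def w_def B_def by simp
    ultimately show ?thesis by simp
  qed
  have LIeq: "LI l = (\<Sum>r<k. of_nat (k choose r) * multi_LL_zeta (k - r) z (s + of_nat l))" for l
  proof -
    define h where "h N = z ^ N / (of_nat N :: complex) powr (s + of_nat l)" for N
    have h0: "h 0 = 0" by (simp add: h_def)
    have hs: "(\<lambda>m. h (sum_list m)) summable_on {m. length m = j}" if "j \<ge> 1" for j
    proof -
      have "(\<lambda>m. norm (h (sum_list m))) summable_on {m. length m = j}"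
        using SA[OF that, of "- Re (s + of_nat l)"] by (simp add: h_def norm_h)
      then show ?thesis using summable_on_iff_abs_summable_on_complex by blast
    qed
    have finI: "finite {m\<in>I. sum_list m = N}" for N by (rule fin_fib'[OF IA])
    have finP: "finite {m\<in>P j. sum_list m = N}" for j N by (rule fin_fib'[OF PA])
    have hsI: "(\<lambda>m. h (sum_list m)) summable_on I"
      by (rule summable_on_subset_banach[OF hs IA]) (use k in simp)
    have hsP: "(\<lambda>m. h (sum_list m)) summable_on P j" if "j \<ge> 1" for j
      by (rule summable_on_subset_banach[OF hs[OF that] PA])
    have "LI l = infsum (\<lambda>m. h (sum_list m)) I"
      unfolding LI_def by (intro infsum_cong) (simp add: w_def B_def h_def)
    also have "\<dots> = infsum (\<lambda>N. of_nat (card {m\<in>I. sum_list m = N}) * h N) UNIV"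
      by (rule group_infsum(2)[OF finI hsI])
    also have "\<dots> = infsum (\<lambda>N. \<Sum>r<k. of_nat (k choose r) * (of_nat (card {m\<in>P (k - r). sum_list m = N}) * h N)) UNIV"
    proof (rule infsum_cong)
      fix N :: nat
      show "of_nat (card {m\<in>I. sum_list m = N}) * h N =
            (\<Sum>r<k. of_nat (k choose r) * (of_nat (card {m\<in>P (k - r). sum_list m = N}) * h N))"
      proof (cases "N = 0")
        case True then show ?thesis by (simp add: h0)
      next
        case False
        have e1: "{m\<in>I. sum_list m = N} = {m. length m = k \<and> (\<forall>x\<in>set m. True) \<and> sum_list m = N}"
          using False by (auto simp: I_def)
        have e2: "{m\<in>P j. sum_list m = N} = {m. length m = j \<and> (\<forall>x\<in>set m. 1 \<le> x) \<and> sum_list m = N}" for j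
          by (auto simp: P_def)
        have "card {m\<in>I. sum_list m = N} = (\<Sum>r<k. (k choose r) * card {m\<in>P (k - r). sum_list m = N})"
          using cnt_identity_r[of N k] False unfolding e1 e2 cntP_def by simp
        then show ?thesis by (simp add: sum_distrib_right sum_distrib_left mult_ac)
      qed
    qed
    also have "\<dots> = (\<Sum>r<k. infsum (\<lambda>N. of_nat (k choose r) * (of_nat (card {m\<in>P (k - r). sum_list m = N}) * h N)) UNIV)"
    proof (rule infsumI, rule has_sum_finsum)
      fix r assume "r \<in> {..<k}"
      then have "k - r \<ge> 1" by simp
      from group_infsum(1)[OF finP hsP[OF this]]
      show "(\<lambda>N. of_nat (k choose r) * (of_nat (card {m\<in>P (k - r). sum_list m = N}) * h N)) summable_on UNIV"
        by (rule summable_on_cmult_right)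
    qed simp
    also have "\<dots> = (\<Sum>r<k. of_nat (k choose r) * multi_LL_zeta (k - r) z (s + of_nat l))"
    proof (rule sum.cong[OF refl])
      fix r assume "r \<in> {..<k}"
      then have r: "k - r \<ge> 1" by simp
      have "multi_LL_zeta (k - r) z (s + of_nat l) = infsum (\<lambda>m. h (sum_list m)) (P (k - r))"
        unfolding multi_LL_zeta_def P_def h_def by simp
      also have "\<dots> = infsum (\<lambda>N. of_nat (card {m\<in>P (k - r). sum_list m = N}) * h N) UNIV"
        by (rule group_infsum(2)[OF finP hsP[OF r]])
      finally show "infsum (\<lambda>N. of_nat (k choose r) * (of_nat (card {m\<in>P (k - r). sum_list m = N}) * h N)) UNIV
          = of_nat (k choose r) * multi_LL_zeta (k - r) z (s + of_nat l)"
        by (simp add: infsum_cmult_right')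
    qed
    finally show ?thesis .
  qed
  define Z0 where "Z0 = (\<lambda>a::real. 1 / (of_real a :: complex) powr s)"
  have split: "multi_HL_zeta k z s (of_real a) = Z0 a + GI a" if a: "0 < a" "a \<le> 1" for a
  proof -
    define f where "f = (\<lambda>m::nat list. z ^ sum_list m / (of_nat (sum_list m) + of_real a) powr s)"
    have nf: "norm (f m) \<le> 2 powr \<bar>Re s\<bar> * (norm (w m) * B m powr (- Re s))" if "m \<in> I" for m
    proof -
      have eq: "(of_nat (sum_list m) + of_real a :: complex) = of_real (real (sum_list m) + a)" by simp
      have "norm (f m) = norm z ^ sum_list m * (real (sum_list m) + a) powr (- Re s)"
        unfolding f_def eq norm_divide norm_power
        by (subst norm_powr_real_powr) (use a in \<open>auto simp: powr_minus_divide\<close>)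
      also have "\<dots> \<le> norm z ^ sum_list m * (2 powr \<bar>Re s\<bar> * real (sum_list m) powr (- Re s))"
        using shift_bound[of "real (sum_list m)" a "Re s"] BI[OF that] a
        by (intro mult_left_mono) (auto simp: B_def)
      finally show ?thesis by (simp add: w_def B_def norm_power mult_ac)
    qed
    have fI: "f summable_on I"
    proof -
      have "(\<lambda>m. norm (f m)) summable_on I"
        using summable_on_cmult_right[OF SI, of "2 powr \<bar>Re s\<bar>"] nf
        by (rule Infinite_Sum.abs_summable_on_comparison_test')
      then show ?thesis using summable_on_iff_abs_summable_on_complex by blast
    qed
    have Z: "{m::nat list. length m = k \<and> sum_list m = 0} = {replicate k 0}"
      by (auto intro: replicate_eqI)
    have AZI: "?A = {replicate k 0} \<union> I" using Z by (auto simp: I_def)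
    have "multi_HL_zeta k z s (of_real a) = infsum f ?A"
      unfolding multi_HL_zeta_def f_def ..
    also have "\<dots> = infsum f {replicate k 0} + infsum f I"
      unfolding AZI by (rule infsum_Un_disjoint) (use fI in \<open>auto simp: I_def\<close>)
    also have "infsum f {replicate k 0} = Z0 a" by (simp add: f_def Z0_def sum_list_replicate)
    also have "infsum f I = GI a"
      unfolding GI_def f_def w_def B_def by (intro infsum_cong) simp
    finally show ?thesis .
  qed
  have JT: "jackson_term q (\<lambda>a. multi_HL_zeta k z s (of_real a)) n = jackson_term q Z0 n + jackson_term q GI n" for n
  proof -
    define x where "x = q powr (- real (Suc n))"
    have x0: "0 < x" using q by (simp add: x_def)
    have x1: "x \<le> 1"
    proof -
      have "x \<le> q powr 0" unfolding x_def using q by (intro powr_mono) auto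
      then show ?thesis using q by simp
    qed
    show ?thesis unfolding jackson_term_def x_def[symmetric] split[OF x0 x1]
      by (simp add: algebra_simps)
  qed
  have Zs: "(\<lambda>n. jackson_term q Z0 n) sums (1 / qnum q (1 - s))"
    unfolding Z0_def by (rule jackson_Z0[OF q s1])
  have Gs: "(\<lambda>n. jackson_term q GI n) sums jackson_integral q GI"
  proof -
    have "summable (jackson_term q GI)" using CI unfolding jackson_integrable_def by blast
    then show ?thesis unfolding jackson_integral_def by (rule summable_sums)
  qed
  have J: "(\<lambda>n. jackson_term q (\<lambda>a. multi_HL_zeta k z s (of_real a)) n) sums
            (1 / qnum q (1 - s) + jackson_integral q GI)"
    unfolding JT by (rule sums_add[OF Zs Gs])
  define X where "X r l = ((- s) gchoose l) * multi_LL_zeta (k - r) z (s + of_nat l) / qnum q (of_nat (l + 1))" for r l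
  have Xs: "summable (X r)" if "r < k" for r
    unfolding X_def by (rule CP) (use that in simp)
  have core_eq: "of_real (1::real) ^ l * ((-s) gchoose l) * LI l / qnum q (of_nat (l+1)) =
       (\<Sum>r<k. of_nat (k choose r) * X r l)" for l
    by (simp add: LIeq X_def sum_distrib_left sum_divide_distrib mult_ac)
  have "(\<lambda>l. \<Sum>r<k. of_nat (k choose r) * X r l) sums (\<Sum>r<k. of_nat (k choose r) * suminf (X r))"
    by (intro sums_sum sums_mult summable_sums Xs) simp
  then have "jackson_integral q GI = (\<Sum>r<k. of_nat (k choose r) * suminf (X r))"
    using CI core_eq by (simp add: sums_iff)
  then show ?thesis
    using J Xs unfolding jackson_integrable_def jackson_integral_def X_def
    by (auto simp: sums_iff)
qed


theorem theorem1p1: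
  fixes q :: real and k :: nat and z s :: complex
  assumes "q > 1" and "k > 0"
  shows
   "(norm z < 1 \<and> Re s < 1 \<longrightarrow>
      jackson_integrable q (\<lambda>a. multi_HL_zeta k z s (of_real a)) \<and>
      (\<forall>r<k. summable (\<lambda>l. ((- s) gchoose l) * multi_LL_zeta (k - r) z (s + of_nat l)
                               / qnum q (of_nat (l + 1)))) \<and>
      jackson_integral q (\<lambda>a. multi_HL_zeta k z s (of_real a)) =
        1 / qnum q (1 - s) +
        (\<Sum>r<k. of_nat (k choose r) *
           (\<Sum>l. ((- s) gchoose l) * multi_LL_zeta (k - r) z (s + of_nat l)
                   / qnum q (of_nat (l + 1)))))
    \<and>
    (z \<noteq> 0 \<and> (norm z < 1 \<or> (norm z = 1 \<and> Re s > real k)) \<longrightarrow>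
      jackson_integrable q (\<lambda>a. multi_HL_zeta k z s (of_nat k - of_real a)) \<and>
      summable (\<lambda>l. (-1) ^ l * ((- s) gchoose l) * multi_LL_zeta k z (s + of_nat l)
                       / qnum q (of_nat (l + 1))) \<and>
      jackson_integral q (\<lambda>a. multi_HL_zeta k z s (of_nat k - of_real a)) =
        z powi (- int k) *
        (\<Sum>l. (-1) ^ l * ((- s) gchoose l) * multi_LL_zeta k z (s + of_nat l)
               / qnum q (of_nat (l + 1))) \<and>
      jackson_integrable q (\<lambda>a. multi_HL_zeta k z s (of_nat k + of_real a)) \<and>
      summable (\<lambda>l. ((- s) gchoose l) * multi_LL_zeta k z (s + of_nat l)
                       / qnum q (of_nat (l + 1))) \<and>
      jackson_integral q (\<lambda>a. multi_HL_zeta k z s (of_nat k + of_real a)) =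
        z powi (- int k) *
        (\<Sum>l. ((- s) gchoose l) * multi_LL_zeta k z (s + of_nat l)
               / qnum q (of_nat (l + 1))))"
  proof (intro conjI impI)
  assume h: "norm z < 1 \<and> Re s < 1"
  show "jackson_integrable q (\<lambda>a. multi_HL_zeta k z s (of_real a))"
    using part1[OF assms(1,2)] h by blast
  show "\<forall>r<k. summable (\<lambda>l. ((- s) gchoose l) * multi_LL_zeta (k - r) z (s + of_nat l)
                               / qnum q (of_nat (l + 1)))"
    using part1[OF assms(1,2)] h by blast
  show "jackson_integral q (\<lambda>a. multi_HL_zeta k z s (of_real a)) =
        1 / qnum q (1 - s) +
        (\<Sum>r<k. of_nat (k choose r) *
           (\<Sum>l. ((- s) gchoose l) * multi_LL_zeta (k - r) z (s + of_nat l)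
                   / qnum q (of_nat (l + 1))))"
    using part1[OF assms(1,2)] h by blast
next
  assume h: "z \<noteq> 0 \<and> (norm z < 1 \<or> (norm z = 1 \<and> Re s > real k))"
  have m: "(\<lambda>a. multi_HL_zeta k z s (of_nat k + of_real (-1) * of_real a)) = (\<lambda>a. multi_HL_zeta k z s (of_nat k - of_real a))"
    by (rule ext) simp
  have p: "(\<lambda>a. multi_HL_zeta k z s (of_nat k + of_real 1 * of_real a)) = (\<lambda>a. multi_HL_zeta k z s (of_nat k + of_real a))"
    by (rule ext) simp
  note M = part2[OF assms(1,2), of z s "-1"]
  note Pl = part2[OF assms(1,2), of z s 1]
  have M': "jackson_integrable q (\<lambda>a. multi_HL_zeta k z s (of_nat k - of_real a)) \<and>
    summable (\<lambda>l. (-1) ^ l * ((- s) gchoose l) * multi_LL_zeta k z (s + of_nat l) / qnum q (of_nat (l + 1))) \<and>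
    jackson_integral q (\<lambda>a. multi_HL_zeta k z s (of_nat k - of_real a)) = z powi (- int k) *
      (\<Sum>l. (-1) ^ l * ((- s) gchoose l) * multi_LL_zeta k z (s + of_nat l) / qnum q (of_nat (l + 1)))"
    using M h unfolding m by simp
  have P': "jackson_integrable q (\<lambda>a. multi_HL_zeta k z s (of_nat k + of_real a)) \<and>
    summable (\<lambda>l. ((- s) gchoose l) * multi_LL_zeta k z (s + of_nat l) / qnum q (of_nat (l + 1))) \<and>
    jackson_integral q (\<lambda>a. multi_HL_zeta k z s (of_nat k + of_real a)) = z powi (- int k) *
      (\<Sum>l. ((- s) gchoose l) * multi_LL_zeta k z (s + of_nat l) / qnum q (of_nat (l + 1)))"
    using Pl h unfolding p by simp
  show "jackson_integrable q (\<lambda>a. multi_HL_zeta k z s (of_nat k - of_real a))" using M' by blast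
  show "summable (\<lambda>l. (-1) ^ l * ((- s) gchoose l) * multi_LL_zeta k z (s + of_nat l)
                       / qnum q (of_nat (l + 1)))" using M' by blast
  show "jackson_integral q (\<lambda>a. multi_HL_zeta k z s (of_nat k - of_real a)) =
        z powi (- int k) *
        (\<Sum>l. (-1) ^ l * ((- s) gchoose l) * multi_LL_zeta k z (s + of_nat l)
               / qnum q (of_nat (l + 1)))" using M' by blast
  show "jackson_integrable q (\<lambda>a. multi_HL_zeta k z s (of_nat k + of_real a))" using P' by blast
  show "summable (\<lambda>l. ((- s) gchoose l) * multi_LL_zeta k z (s + of_nat l)
                       / qnum q (of_nat (l + 1)))" using P' by blast
  show "jackson_integral q (\<lambda>a. multi_HL_zeta k z s (of_nat k + of_real a)) =
        z powi (- int k) *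
        (\<Sum>l. ((- s) gchoose l) * multi_LL_zeta k z (s + of_nat l)
               / qnum q (of_nat (l + 1)))" using P' by blast
qed

end
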